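(* If $p$ is a prime number with $p\geq 7$, then \[ B^{(-p+3)}_{p-3}\equiv 0\pmod p. \]
   Context: For any integer $k$, let $\mathrm{Li}_k(t)=\sum_{n=1}^{\infty} t^n/n^k$. The poly-Bernoulli numbers $B^{(k)}_n$ ($n\ge 0$) are defined by $\frac{\mathrm{Li}_k(1-e^{-t})}{1-e^{-t}}=\sum_{n=0}^{\infty}B^{(k)}_n\frac{t^n}{n!}$. For negative upper index these are integers. *)

theory Defs
  imports "HOL-Computational_Algebra.Formal_Power_Series"
begin

text \<open>Formal power series of Li_k(x)/x = sum_{n>=0} x^n / (n+1)^k, for any integer k.\<close>
definition Li_div_fps :: "int \<Rightarrow> rat fps" where
  "Li_div_fps k = Abs_fps (\<lambda>n. (of_nat (n + 1)) powi (- k))"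

text \<open>Poly-Bernoulli numbers: Li_k(1-e^{-t})/(1-e^{-t}) = sum_n B_n^(k) t^n/n!.
  The generating function is the composition of Li_k(x)/x with x = 1 - e^{-t}.\<close>
definition poly_bernoulli :: "int \<Rightarrow> nat \<Rightarrow> rat" where
  "poly_bernoulli k n = fact n * fps_nth (Li_div_fps k oo (1 - fps_exp (-1))) n"

end

theory Submission
  imports Defs "HOL-Number_Theory.Number_Theory" "HOL-Computational_Algebra.Polynomial"
begin

definition Bz :: "nat \<Rightarrow> int" where
  "Bz p = (\<Sum>r<p. (int r)^(p-3) * (\<Sum>j<p. (-1)^j * int ((r-1) choose j) * (int j)^(p-3)))"


lemma fermat_int:
  assumes "prime p" "1 \<le> a" "a < p"
  shows "[(int a)^(p-1) = 1] (mod int p)"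
proof -
  have "\<not> p dvd a" using assms by (auto dest: dvd_imp_le)
  then have "[a^(p-1) = 1] (mod p)" using fermat_theorem assms(1) by blast
  then show ?thesis by (metis cong_int_iff of_nat_1 of_nat_power)
qed

lemma coprime_small:
  assumes "prime p" "1 \<le> a" "a < p"
  shows "coprime (int a) (int p)"
proof -
  have "\<not> p dvd a" using assms by (auto dest: dvd_imp_le)
  then have "coprime a p" using assms(1) by (metis prime_imp_coprime coprime_commute)
  then show ?thesis by simp
qed

definition Qp :: "nat \<Rightarrow> nat \<Rightarrow> int poly" where
  "Qp p j = (\<Prod>i\<in>{1..j}. [:1, -((int i)^(p-2)) :])"

definition hh :: "nat \<Rightarrow> nat \<Rightarrow> int" where
  "hh p j = (\<Sum>i\<in>{1..j}. (int i)^(p-2))"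

lemma Qp_0 [simp]: "Qp p 0 = 1" by (simp add: Qp_def)
lemma hh_0 [simp]: "hh p 0 = 0" by (simp add: hh_def)

lemma Qp_Suc: "Qp p (Suc j) = Qp p j * [:1, -((int (Suc j))^(p-2)) :]"
  unfolding Qp_def by (simp add: prod.nat_ivl_Suc' mult.commute)

lemma hh_Suc: "hh p (Suc j) = hh p j + (int (Suc j))^(p-2)"
  unfolding hh_def by (simp add: sum.nat_ivl_Suc')

lemma coeff_mult_lin0: "coeff ((q::int poly) * [:1, c :]) 0 = coeff q 0"
  by (simp add: mult_pCons_right)

lemma coeff_mult_linS: "coeff ((q::int poly) * [:1, c :]) (Suc k) = coeff q (Suc k) + c * coeff q k"
  by (simp add: mult_pCons_right)

lemma Qp_coeff0 [simp]: "coeff (Qp p j) 0 = 1"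
  by (induction j) (simp_all add: Qp_Suc coeff_mult_lin0)

lemma Qp_coeff1: "coeff (Qp p j) 1 = - hh p j"
proof (induction j)
  case 0 then show ?case by simp
next
  case (Suc j)
  have "coeff (Qp p (Suc j)) (Suc 0) = coeff (Qp p j) (Suc 0) + (-((int (Suc j))^(p-2))) * coeff (Qp p j) 0"
    unfolding Qp_Suc by (rule coeff_mult_linS)
  then show ?case using Suc by (simp add: hh_Suc)
qed

lemma Qp_coeff2_Suc: "coeff (Qp p (Suc j)) 2 = coeff (Qp p j) 2 + (int (Suc j))^(p-2) * hh p j"
proof -
  have "coeff (Qp p (Suc j)) (Suc 1) = coeff (Qp p j) (Suc 1) + (-((int (Suc j))^(p-2))) * coeff (Qp p j) 1"
    unfolding Qp_Suc by (rule coeff_mult_linS)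
  moreover have "coeff (Qp p j) (Suc 0) = - hh p j" using Qp_coeff1[of p j] by simp
  ultimately show ?thesis by (simp add: numeral_2_eq_2)
qed

lemma Qp_coeff2_0 [simp]: "coeff (Qp p 0) 2 = 0" by simp

lemma Qp_degree: "degree (Qp p j) \<le> j"
proof (induction j)
  case 0 then show ?case by simp
next
  case (Suc j)
  have "degree (Qp p (Suc j)) \<le> degree (Qp p j) + degree [:1, -((int (Suc j))^(p-2)) :]"
    unfolding Qp_Suc by (rule degree_mult_le)
  also have "\<dots> \<le> j + 1" using Suc by simp
  finally show ?case by simp
qed

lemma poly_Qp_Suc: "poly (Qp p (Suc j)) x = poly (Qp p j) x * (1 - x * (int (Suc j))^(p-2))"
  by (simp add: Qp_Suc algebra_simps)

lemma binom_step_int: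
  "int (Suc j) * int (m choose Suc j) = (int m - int j) * int (m choose j)"
proof (cases "j \<le> m")
  case True
  have "(m - j) * (m choose j) = Suc j * (m choose Suc j)"
    using binomial_absorb_comp[of m j] times_binomial_minus1_eq[of "Suc j" m]
    by (metis diff_Suc_1 zero_less_Suc)
  then show ?thesis using True by (metis of_nat_diff of_nat_mult)
next
  case False
  then have a: "m choose j = 0" and b: "m choose Suc j = 0" by (auto simp: binomial_eq_0)
  show ?thesis by (simp only: a b)
qed


lemma binom_cong_Q:
  assumes p: "prime p" and r: "1 \<le> r"
  shows "j < p \<Longrightarrow> [(-1)^j * int ((r-1) choose j) = poly (Qp p j) (int r)] (mod int p)"
proof (induction j)
  case 0 then show ?case by simp
next
  case (Suc j)
  define c where "c = (-1::int)^j * int ((r-1) choose j)"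
  define q where "q = poly (Qp p j) (int r)"
  have IH: "[c = q] (mod int p)" using Suc by (simp add: c_def q_def)
  have p2: "p \<ge> 2" using p prime_ge_2_nat by blast
  have e1: "int (Suc j) * ((-1)^(Suc j) * int ((r-1) choose Suc j)) = (int (Suc j) - int r) * c"
  proof -
    have h: "int (Suc j) * int ((r-1) choose Suc j) = (int (r-1) - int j) * int ((r-1) choose j)"
      by (rule binom_step_int)
    have rr: "int (r-1) = int r - 1" using r by simp
    have g: "\<And>(a::int) b x y. a * b = (x - 1 - int j) * y \<Longrightarrow> a * ((-1)^(Suc j) * b) = (int (Suc j) - x) * ((-1)^j * y)"
    proof -
      fix a b x y :: int assume asm: "a * b = (x - 1 - int j) * y"
      have "a * ((-1)^(Suc j) * b) = (-1)^(Suc j) * (a * b)" by (simp only: mult.left_commute)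
      also have "\<dots> = (-1)^(Suc j) * ((x - 1 - int j) * y)" using asm by simp
      also have "\<dots> = (int (Suc j) - x) * ((-1)^j * y)" by (simp add: algebra_simps)
      finally show "a * ((-1)^(Suc j) * b) = (int (Suc j) - x) * ((-1)^j * y)" .
    qed
    show ?thesis unfolding c_def by (rule g) (use h rr in simp)
  qed
  have e2: "int (Suc j) * poly (Qp p (Suc j)) (int r) = q * (int (Suc j) - int r * (int (Suc j))^(p-1))"
  proof -
    have "p - 1 = Suc (p - 2)" using p2 by simp
    then have "(int (Suc j))^(p-1) = int (Suc j) * (int (Suc j))^(p-2)" by simp
    then show ?thesis unfolding poly_Qp_Suc q_def by (simp add: algebra_simps)
  qed
  have f: "[(int (Suc j))^(p-1) = 1] (mod int p)" using fermat_int[OF p, of "Suc j"] Suc by simp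
  have "[q * (int (Suc j) - int r * (int (Suc j))^(p-1)) = q * (int (Suc j) - int r * 1)] (mod int p)"
    by (intro cong_mult cong_diff cong_refl f)
  moreover have "q * (int (Suc j) - int r * 1) = (int (Suc j) - int r) * q" by simp
  moreover have "[(int (Suc j) - int r) * q = (int (Suc j) - int r) * c] (mod int p)"
    using IH by (intro cong_mult cong_refl) (rule cong_sym)
  ultimately have "[int (Suc j) * poly (Qp p (Suc j)) (int r) = (int (Suc j) - int r) * c] (mod int p)"
    unfolding e2 by (metis cong_trans)
  then have "[int (Suc j) * ((-1)^(Suc j) * int ((r-1) choose Suc j)) = int (Suc j) * poly (Qp p (Suc j)) (int r)] (mod int p)"
    unfolding e1 by (rule cong_sym)
  moreover have "coprime (int (Suc j)) (int p)" using coprime_small[OF p, of "Suc j"] Suc by simp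
  ultimately show ?case using cong_mult_lcancel by blast
qed


lemma psum_identity:
  "(\<Sum>k\<le>e. of_nat (Suc e choose k) * (\<Sum>r<p. (int r)^k)) = (int p)^(Suc e)"
proof -
  have "(\<Sum>r<p. (int (Suc r))^(Suc e) - (int r)^(Suc e)) = (int p)^(Suc e) - (int 0)^(Suc e)"
    by (rule sum_lessThan_telescope)
  then have t: "(\<Sum>r<p. (int r + 1)^(Suc e) - (int r)^(Suc e)) = (int p)^(Suc e)" by (simp add: add.commute)
  have "(int r + 1)^(Suc e) - (int r)^(Suc e) = (\<Sum>k\<le>e. of_nat (Suc e choose k) * (int r)^k)" for r
  proof -
    have "(int r + 1)^(Suc e) = (\<Sum>k\<le>Suc e. of_nat (Suc e choose k) * (int r)^k * 1^(Suc e - k))"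
      by (rule binomial_ring)
    then show ?thesis by simp
  qed
  then have "(\<Sum>r<p. (\<Sum>k\<le>e. of_nat (Suc e choose k) * (int r)^k)) = (int p)^(Suc e)" using t by simp
  then show ?thesis by (simp add: sum_distrib_left sum.swap[of _ "{..<p}"])
qed

lemma psum_small:
  assumes p: "prime p"
  shows "1 \<le> e \<Longrightarrow> e \<le> p - 2 \<Longrightarrow> int p dvd (\<Sum>r<p. (int r)^e)"
proof (induction e rule: less_induct)
  case (less e)
  define S where "S k = (\<Sum>r<p. (int r)^k)" for k
  have id: "(\<Sum>k\<le>e. of_nat (Suc e choose k) * S k) = (int p)^(Suc e)"
    unfolding S_def by (rule psum_identity)
  have low: "int p dvd (\<Sum>k<e. of_nat (Suc e choose k) * S k)"
  proof (rule dvd_sum)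
    fix k assume k: "k \<in> {..<e}"
    show "int p dvd of_nat (Suc e choose k) * S k"
    proof (cases "k = 0")
      case True then show ?thesis by (simp add: S_def)
    next
      case False then show ?thesis using less k unfolding S_def by (intro dvd_mult) auto
    qed
  qed
  have "(\<Sum>k\<le>e. of_nat (Suc e choose k) * S k) = (\<Sum>k<e. of_nat (Suc e choose k) * S k) + of_nat (Suc e) * S e"
    by (simp add: lessThan_Suc_atMost[symmetric])
  then have "of_nat (Suc e) * S e = (int p)^(Suc e) - (\<Sum>k<e. of_nat (Suc e choose k) * S k)"
    using id by simp
  moreover have "int p dvd (int p)^(Suc e)" by simp
  ultimately have "int p dvd of_nat (Suc e) * S e" using low by (simp add: dvd_diff)
  moreover have "coprime (int (Suc e)) (int p)" using coprime_small[OF p, of "Suc e"] less p prime_ge_2_nat[OF p] by simp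
  ultimately have "int p dvd S e" by (metis coprime_commute coprime_dvd_mult_right_iff)
  then show ?case by (simp add: S_def)
qed

lemma psum:
  assumes p: "prime p" and e: "1 \<le> e" "e \<le> 2*p - 3"
  shows "[(\<Sum>r<p. (int r)^e) = (if e = p - 1 then -1 else 0)] (mod int p)"
proof -
  have p2: "p \<ge> 2" using p prime_ge_2_nat by blast
  consider "e \<le> p - 2" | "e = p - 1" | "e \<ge> p" by linarith
  then show ?thesis
  proof cases
    case 1
    then have "e \<noteq> p - 1" using p2 by simp
    then show ?thesis using psum_small[OF p e(1) 1] by (simp add: cong_0_iff)
  next
    case 2
    have "[(\<Sum>r<p. (int r)^e) = (\<Sum>r<p. (if r = 0 then 0 else 1))] (mod int p)"
    proof (rule cong_sum)
      fix r assume "r \<in> {..<p}"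
      then show "[(int r)^e = (if r = 0 then 0 else 1)] (mod int p)"
        using fermat_int[OF p, of r] 2 e p2 by (cases "r = 0") (auto simp: power_0_left)
    qed
    also have "(\<Sum>r<p. (if r = 0 then 0 else 1::int)) = int p - 1"
    proof -
      have "(\<Sum>r<p. (if r = 0 then 0 else 1::int)) = (\<Sum>r\<in>{..<p} - {0}. 1)"
        by (rule sum.mono_neutral_cong_right) auto
      also have "\<dots> = int p - 1" using p2 by simp
      finally show ?thesis .
    qed
    also have "[int p - 1 = -1] (mod int p)" by (simp add: cong_iff_dvd_diff)
    finally show ?thesis using 2 by simp
  next
    case 3
    define e' where "e' = e - (p - 1)"
    have e': "1 \<le> e'" "e' \<le> p - 2" "e = e' + (p - 1)" using 3 e p2 unfolding e'_def by auto
    have "[(\<Sum>r<p. (int r)^e) = (\<Sum>r<p. (int r)^e')] (mod int p)"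
    proof (rule cong_sum)
      fix r assume r: "r \<in> {..<p}"
      show "[(int r)^e = (int r)^e'] (mod int p)"
      proof (cases "r = 0")
        case True then show ?thesis using e' p2 by (simp add: power_0_left)
      next
        case False
        then have "[(int r)^e' * (int r)^(p-1) = (int r)^e' * 1] (mod int p)"
          using fermat_int[OF p, of r] r by (intro cong_mult cong_refl) auto
        then show ?thesis using e'(3) by (simp add: power_add)
      qed
    qed
    moreover have "[(\<Sum>r<p. (int r)^e') = 0] (mod int p)"
      using psum_small[OF p e'(1) e'(2)] by (simp add: cong_0_iff)
    moreover have "e \<noteq> p - 1" using 3 p2 by simp
    ultimately show ?thesis using cong_trans by simp
  qed
qed


lemma poly_sum_lt:
  fixes q :: "int poly"
  assumes "degree q < m"
  shows "poly q x = (\<Sum>i<m. coeff q i * x^i)"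
proof -
  have "poly q x = (\<Sum>i\<le>degree q. coeff q i * x^i)" by (rule poly_altdef)
  also have "\<dots> = (\<Sum>i<m. coeff q i * x^i)"
    by (rule sum.mono_neutral_left) (use assms le_degree in auto)
  finally show ?thesis .
qed

lemma poly_psum:
  fixes q :: "int poly"
  assumes p: "prime p" and p7: "p \<ge> 7" and dq: "degree q \<le> p - 1"
  shows "[(\<Sum>r<p. (int r)^(p-3) * poly q (int r)) = - coeff q 2] (mod int p)"
proof -
  define n where "n = p - 3"
  have "(int r)^n * poly q (int r) = (\<Sum>i<p. coeff q i * (int r)^(n+i))" for r
  proof -
    have "poly q (int r) = (\<Sum>i<p. coeff q i * (int r)^i)"
      by (rule poly_sum_lt) (use dq p7 in simp)
    then have "(int r)^n * poly q (int r) = (\<Sum>i<p. (int r)^n * (coeff q i * (int r)^i))"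
      by (simp add: sum_distrib_left)
    also have "\<dots> = (\<Sum>i<p. coeff q i * (int r)^(n+i))"
      by (intro sum.cong refl) (simp only: power_add mult.left_commute)
    finally show ?thesis .
  qed
  then have "(\<Sum>r<p. (int r)^n * poly q (int r)) = (\<Sum>r<p. (\<Sum>i<p. coeff q i * (int r)^(n+i)))"
    by simp
  also have "\<dots> = (\<Sum>i<p. coeff q i * (\<Sum>r<p. (int r)^(n+i)))"
    unfolding sum_distrib_left by (rule sum.swap)
  also have "[\<dots> = (\<Sum>i<p. coeff q i * (if n+i = p-1 then -1 else 0))] (mod int p)"
  proof (rule cong_sum)
    fix i assume i: "i \<in> {..<p}"
    show "[coeff q i * (\<Sum>r<p. (int r)^(n+i)) = coeff q i * (if n+i = p-1 then -1 else 0)] (mod int p)"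
      by (intro cong_mult cong_refl psum[OF p]) (use i p7 n_def in auto)
  qed
  also have "(\<Sum>i<p. coeff q i * (if n+i = p-1 then -1 else 0::int)) = (\<Sum>i<p. if i = 2 then - coeff q i else 0)"
    by (rule sum.cong) (use p7 n_def in auto)
  also have "\<dots> = - coeff q 2" using p7 by (simp add: sum.delta)
  finally show ?thesis unfolding n_def .
qed


lemma binom_diff_int:
  "int (Suc r) * (int (Suc r choose j) - int (r choose j)) = int j * int (Suc r choose j)"
proof (cases j)
  case 0 then show ?thesis by simp
next
  case (Suc i)
  have "int (Suc r choose Suc i) - int (r choose Suc i) = int (r choose i)" by simp
  moreover have "int (Suc r) * int (r choose i) = int (Suc i) * int (Suc r choose Suc i)"
    using Suc_times_binomial_eq[of r i] by (metis mult.commute of_nat_mult)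
  ultimately show ?thesis using Suc by simp
qed

lemma A_cong:
  assumes p: "prime p" and p7: "p \<ge> 7"
  shows "r \<le> p - 1 \<Longrightarrow> [(\<Sum>j<p. (-1)^(j+1) * (int j)^(p-2) * int (r choose j)) = hh p r] (mod int p)"
proof (induction r)
  case 0
  have "(\<Sum>j<p. (-1)^(j+1) * (int j)^(p-2) * int (0 choose j)) = 0"
    by (rule sum.neutral) (use p7 in \<open>auto simp: power_0_left\<close>)
  then show ?case by simp
next
  case (Suc r)
  define D where "D = (\<Sum>j<p. (-1)^(j+1) * (int j)^(p-2) * (int (Suc r choose j) - int (r choose j)))"
  have AD: "(\<Sum>j<p. (-1)^(j+1) * (int j)^(p-2) * int (Suc r choose j))
      = (\<Sum>j<p. (-1)^(j+1) * (int j)^(p-2) * int (r choose j)) + D"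
    unfolding D_def by (simp add: sum.distrib[symmetric] algebra_simps)
  have pm: "p - 1 = Suc (p - 2)" using p7 by simp
  have "int (Suc r) * D = (\<Sum>j<p. (-1)^(j+1) * (int j)^(p-1) * int (Suc r choose j))"
    unfolding D_def sum_distrib_left
  proof (intro sum.cong refl)
    fix j
    have "int (Suc r) * ((-1)^(j+1) * (int j)^(p-2) * (int (Suc r choose j) - int (r choose j)))
        = (-1)^(j+1) * (int j)^(p-2) * (int (Suc r) * (int (Suc r choose j) - int (r choose j)))"
      by (simp only: mult_ac)
    also have "\<dots> = (-1)^(j+1) * ((int j)^(p-2) * int j) * int (Suc r choose j)"
      unfolding binom_diff_int by (simp only: mult_ac)
    also have "(int j)^(p-2) * int j = (int j)^(p-1)" unfolding pm by simp
    finally show "int (Suc r) * ((-1)^(j+1) * (int j)^(p-2) * (int (Suc r choose j) - int (r choose j)))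
        = (-1)^(j+1) * (int j)^(p-1) * int (Suc r choose j)" .
  qed
  also have "[\<dots> = (\<Sum>j<p. (-1)^(j+1) * (if j = 0 then 0 else 1) * int (Suc r choose j))] (mod int p)"
  proof (rule cong_sum)
    fix j assume j: "j \<in> {..<p}"
    show "[(-1)^(j+1) * (int j)^(p-1) * int (Suc r choose j) = (-1)^(j+1) * (if j = 0 then 0 else 1) * int (Suc r choose j)] (mod int p)"
    proof (cases "j = 0")
      case True then show ?thesis using p7 by (simp add: power_0_left)
    next
      case False
      then show ?thesis using fermat_int[OF p, of j] j by (intro cong_mult cong_refl) auto
    qed
  qed
  also have "(\<Sum>j<p. (-1)^(j+1) * (if j = 0 then 0 else 1) * int (Suc r choose j))
      = (\<Sum>j<p. (-1)^(j+1) * int (Suc r choose j)) + 1"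
  proof -
    have "(\<Sum>j<p. (-1)^(j+1) * int (Suc r choose j)) = (-1)^(0+1) * int (Suc r choose 0) + (\<Sum>j\<in>{..<p}-{0}. (-1)^(j+1) * int (Suc r choose j))"
      by (rule sum.remove) (use p7 in auto)
    moreover have "(\<Sum>j<p. (-1)^(j+1) * (if j = 0 then 0 else 1) * int (Suc r choose j)) = (\<Sum>j\<in>{..<p}-{0}. (-1)^(j+1) * int (Suc r choose j))"
      by (rule sum.mono_neutral_cong_right) auto
    ultimately show ?thesis by simp
  qed
  also have "(\<Sum>j<p. (-1)^(j+1) * int (Suc r choose j)) = - (\<Sum>j\<le>Suc r. (-1)^j * of_nat (Suc r choose j))"
  proof -
    have "(\<Sum>j<p. (-1)^(j+1) * int (Suc r choose j)) = (\<Sum>j\<le>Suc r. (-1)^(j+1) * int (Suc r choose j))"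
      by (rule sum.mono_neutral_right) (use Suc.prems in auto)
    then show ?thesis by (simp add: sum_negf[symmetric])
  qed
  also have "(\<Sum>j\<le>Suc r. (-1)^j * of_nat (Suc r choose j)) = (0::int)"
    by (rule choose_alternating_sum) simp
  finally have c1: "[int (Suc r) * D = 1] (mod int p)" by simp
  have "[int (Suc r) * (int (Suc r))^(p-2) = 1] (mod int p)"
    using fermat_int[OF p, of "Suc r"] Suc.prems p7 pm by simp
  then have "[int (Suc r) * D = int (Suc r) * (int (Suc r))^(p-2)] (mod int p)"
    using c1 by (metis cong_sym cong_trans)
  moreover have "coprime (int (Suc r)) (int p)" using coprime_small[OF p, of "Suc r"] Suc.prems p7 by simp
  ultimately have cD: "[D = (int (Suc r))^(p-2)] (mod int p)" using cong_mult_lcancel by blast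
  have IH: "[(\<Sum>j<p. (-1)^(j+1) * (int j)^(p-2) * int (r choose j)) = hh p r] (mod int p)"
    using Suc by simp
  show ?case unfolding AD hh_Suc by (rule cong_add[OF IH cD])
qed


lemma rX:
  assumes p: "prime p" and p7: "p \<ge> 7" and r: "1 \<le> r" "r \<le> p - 1"
  shows "[int r * (\<Sum>i<p-1. (int (Suc i))^(p-3) * ((-1)^i * int ((r-1) choose i))) = hh p r] (mod int p)"
proof -
  have pm: "p - 2 = Suc (p - 3)" using p7 by simp
  have "int r * (\<Sum>i<p-1. (int (Suc i))^(p-3) * ((-1)^i * int ((r-1) choose i)))
      = (\<Sum>i<p-1. (-1)^(Suc i + 1) * (int (Suc i))^(p-2) * int (r choose Suc i))"
    unfolding sum_distrib_left
  proof (intro sum.cong refl)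
    fix i
    have b: "int (Suc i) * int (r choose Suc i) = int r * int ((r-1) choose i)"
      using times_binomial_minus1_eq[of "Suc i" r] by (metis diff_Suc_1 of_nat_mult zero_less_Suc)
    have "int r * ((int (Suc i))^(p-3) * ((-1)^i * int ((r-1) choose i)))
        = (-1)^i * (int (Suc i))^(p-3) * (int r * int ((r-1) choose i))" by (simp only: mult_ac)
    also have "\<dots> = (-1)^i * (int (Suc i))^(p-3) * (int (Suc i) * int (r choose Suc i))" unfolding b ..
    also have "\<dots> = (-1)^(Suc i + 1) * (int (Suc i))^(p-2) * int (r choose Suc i)"
      unfolding pm by (simp add: mult_ac)
    finally show "int r * ((int (Suc i))^(p-3) * ((-1)^i * int ((r-1) choose i)))
        = (-1)^(Suc i + 1) * (int (Suc i))^(p-2) * int (r choose Suc i)" .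
  qed
  also have "\<dots> = (\<Sum>j<p. (-1)^(j+1) * (int j)^(p-2) * int (r choose j))"
  proof -
    have ps: "p = Suc (p - 1)" using p7 by simp
    have "(\<Sum>j<Suc (p-1). (-1)^(j+1) * (int j)^(p-2) * int (r choose j))
       = (-1)^(0+1) * (int 0)^(p-2) * int (r choose 0) + (\<Sum>i<p-1. (-1)^(Suc i + 1) * (int (Suc i))^(p-2) * int (r choose Suc i))"
      by (rule sum.lessThan_Suc_shift)
    then show ?thesis using ps p7 by (simp add: power_0_left)
  qed
  also have "[\<dots> = hh p r] (mod int p)" by (rule A_cong[OF p p7 r(2)])
  finally show ?thesis .
qed


lemma C2_cong:
  assumes p: "prime p" and p7: "p \<ge> 7"
  shows "[(\<Sum>j<p. (int j)^(p-3) * coeff (Qp p j) 2) = 0] (mod int p)"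
proof -
  define n where "n = p - 3"
  define q where "q = p - 1"
  have ps: "p = Suc q" and n4: "n \<ge> 4" and nq: "n < q" using p7 unfolding q_def n_def by auto
  have n1: "n = Suc (n - 1)" using n4 by simp
  have pm2: "p - 2 = Suc n" and pm1: "p - 1 = Suc (Suc n)" using p7 unfolding n_def by auto
  have "(\<Sum>j<p. (int j)^n * coeff (Qp p j) 2) = (int 0)^n * coeff (Qp p 0) 2 + (\<Sum>i<q. (int (Suc i))^n * coeff (Qp p (Suc i)) 2)"
    unfolding ps by (rule sum.lessThan_Suc_shift)
  also have "\<dots> = (\<Sum>i<q. (int (Suc i))^n * coeff (Qp p i) 2) + (\<Sum>i<q. (int (Suc i))^n * ((int (Suc i))^(p-2) * hh p i))"
  proof -
    have "(int (Suc i))^n * coeff (Qp p (Suc i)) 2 = (int (Suc i))^n * coeff (Qp p i) 2 + (int (Suc i))^n * ((int (Suc i))^(p-2) * hh p i)" for i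
      by (simp only: Qp_coeff2_Suc distrib_left)
    moreover have "(int 0)^n * coeff (Qp p 0) 2 = 0" by simp
    ultimately show ?thesis by (simp only: sum.distrib add_0_left)
  qed
  finally have E1: "(\<Sum>j<p. (int j)^n * coeff (Qp p j) 2) = (\<Sum>i<q. (int (Suc i))^n * coeff (Qp p i) 2) + (\<Sum>i<q. (int (Suc i))^n * ((int (Suc i))^(p-2) * hh p i))" .
  have C1: "[(\<Sum>i<q. (int (Suc i))^n * coeff (Qp p i) 2) = - (\<Sum>r<p. (int r)^(n-1) * hh p r)] (mod int p)"
  proof -
    have "[(\<Sum>i<q. (int (Suc i))^n * coeff (Qp p i) 2)
        = (\<Sum>i<q. (int (Suc i))^n * (- (\<Sum>r<p. (int r)^n * ((-1)^i * int ((r-1) choose i)))))] (mod int p)"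
    proof (rule cong_sum)
      fix i assume i: "i \<in> {..<q}"
      have deg: "degree (Qp p i) \<le> p - 1" using Qp_degree[of p i] i q_def by simp
      have "[(\<Sum>r<p. (int r)^(p-3) * poly (Qp p i) (int r)) = - coeff (Qp p i) 2] (mod int p)"
        by (rule poly_psum[OF p p7 deg])
      then have c1: "[coeff (Qp p i) 2 = - (\<Sum>r<p. (int r)^n * poly (Qp p i) (int r))] (mod int p)"
        unfolding n_def by (metis cong_sym cong_uminus minus_minus)
      have c2: "[(\<Sum>r<p. (int r)^n * poly (Qp p i) (int r)) = (\<Sum>r<p. (int r)^n * ((-1)^i * int ((r-1) choose i)))] (mod int p)"
      proof (rule cong_sum)
        fix r assume r: "r \<in> {..<p}"
        show "[(int r)^n * poly (Qp p i) (int r) = (int r)^n * ((-1)^i * int ((r-1) choose i))] (mod int p)"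
        proof (cases "r = 0")
          case True then show ?thesis using n4 by (simp add: power_0_left)
        next
          case False
          then show ?thesis using binom_cong_Q[OF p, of r i] i q_def r
            by (intro cong_mult cong_refl) (auto intro: cong_sym)
        qed
      qed
      show "[(int (Suc i))^n * coeff (Qp p i) 2 = (int (Suc i))^n * (- (\<Sum>r<p. (int r)^n * ((-1)^i * int ((r-1) choose i))))] (mod int p)"
        by (intro cong_mult cong_refl) (rule cong_trans[OF c1 cong_uminus[OF c2]])
    qed
    also have "(\<Sum>i<q. (int (Suc i))^n * (- (\<Sum>r<p. (int r)^n * ((-1)^i * int ((r-1) choose i)))))
        = - (\<Sum>r<p. (int r)^n * (\<Sum>i<q. (int (Suc i))^n * ((-1)^i * int ((r-1) choose i))))"
    proof -
      have "(\<Sum>i<q. (int (Suc i))^n * (- (\<Sum>r<p. (int r)^n * ((-1)^i * int ((r-1) choose i)))))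
          = - (\<Sum>i<q. \<Sum>r<p. (int r)^n * ((int (Suc i))^n * ((-1)^i * int ((r-1) choose i))))"
        by (simp only: mult_minus_right sum_negf sum_distrib_left mult.left_commute)
      also have "(\<Sum>i<q. \<Sum>r<p. (int r)^n * ((int (Suc i))^n * ((-1)^i * int ((r-1) choose i))))
          = (\<Sum>r<p. \<Sum>i<q. (int r)^n * ((int (Suc i))^n * ((-1)^i * int ((r-1) choose i))))"
        by (rule sum.swap)
      finally show ?thesis by (simp only: sum_distrib_left)
    qed
    also have "[\<dots> = - (\<Sum>r<p. (int r)^(n-1) * hh p r)] (mod int p)"
    proof (rule cong_uminus, rule cong_sum)
      fix r assume r: "r \<in> {..<p}"
      show "[(int r)^n * (\<Sum>i<q. (int (Suc i))^n * ((-1)^i * int ((r-1) choose i))) = (int r)^(n-1) * hh p r] (mod int p)"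
      proof (cases "r = 0")
        case True then show ?thesis using n4 by (simp add: power_0_left)
      next
        case False
        have "[int r * (\<Sum>i<p-1. (int (Suc i))^(p-3) * ((-1)^i * int ((r-1) choose i))) = hh p r] (mod int p)"
          using rX[OF p p7, of r] False r by simp
        then have "[(int r)^(n-1) * (int r * (\<Sum>i<q. (int (Suc i))^n * ((-1)^i * int ((r-1) choose i)))) = (int r)^(n-1) * hh p r] (mod int p)"
          unfolding n_def q_def by (intro cong_mult cong_refl)
        moreover have "(int r)^n = (int r)^(n-1) * int r" using n1 by (metis power_Suc2)
        ultimately show ?thesis by (simp add: mult.assoc)
      qed
    qed
    finally show ?thesis .
  qed
  have C2: "[(\<Sum>i<q. (int (Suc i))^n * ((int (Suc i))^(p-2) * hh p i)) = (\<Sum>r<p. (int r)^(n-1) * hh p (r - 1))] (mod int p)"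
  proof -
    have "[(\<Sum>i<q. (int (Suc i))^n * ((int (Suc i))^(p-2) * hh p i)) = (\<Sum>i<q. (int (Suc i))^(n-1) * hh p i)] (mod int p)"
    proof (rule cong_sum)
      fix i assume i: "i \<in> {..<q}"
      have e: "(int (Suc i))^n * ((int (Suc i))^(p-2) * hh p i) = (int (Suc i))^(n-1) * hh p i * (int (Suc i))^(p-1)"
      proof -
        have "n + (p - 2) = (n - 1) + (p - 1)" using n4 p7 by simp
        then have "(int (Suc i))^n * (int (Suc i))^(p-2) = (int (Suc i))^(n-1) * (int (Suc i))^(p-1)"
          by (metis power_add)
        then show ?thesis by (simp add: mult_ac)
      qed
      have "[(int (Suc i))^(n-1) * hh p i * (int (Suc i))^(p-1) = (int (Suc i))^(n-1) * hh p i * 1] (mod int p)"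
        using fermat_int[OF p, of "Suc i"] i q_def by (intro cong_mult cong_refl) auto
      then show "[(int (Suc i))^n * ((int (Suc i))^(p-2) * hh p i) = (int (Suc i))^(n-1) * hh p i] (mod int p)"
        unfolding e by simp
    qed
    also have "(\<Sum>i<q. (int (Suc i))^(n-1) * hh p i) = (\<Sum>r<p. (int r)^(n-1) * hh p (r - 1))"
    proof -
      have "(\<Sum>r<Suc q. (int r)^(n-1) * hh p (r - 1)) = (int 0)^(n-1) * hh p (0 - 1) + (\<Sum>i<q. (int (Suc i))^(n-1) * hh p (Suc i - 1))"
        by (rule sum.lessThan_Suc_shift)
      then show ?thesis using ps n4 by (simp add: power_0_left)
    qed
    finally show ?thesis .
  qed
  have E3: "(- (\<Sum>r<p. (int r)^(n-1) * hh p r)) + (\<Sum>r<p. (int r)^(n-1) * hh p (r - 1)) = - (\<Sum>r<p. (int r)^(2*p-6))"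
  proof -
    have "(int r)^(n-1) * hh p (r - 1) - (int r)^(n-1) * hh p r = - ((int r)^(2*p-6))" for r
    proof (cases r)
      case 0 then show ?thesis using n4 p7 by (simp add: power_0_left)
    next
      case (Suc k)
      have "(n-1) + (p-2) = 2*p-6" using p7 unfolding n_def by simp
      then have e: "(int r)^(n-1) * (int r)^(p-2) = (int r)^(2*p-6)" by (simp only: power_add[symmetric])
      have h: "hh p r = hh p (r - 1) + (int r)^(p-2)" using Suc by (simp only: hh_Suc diff_Suc_1)
      have "(int r)^(n-1) * hh p r = (int r)^(n-1) * hh p (r - 1) + (int r)^(2*p-6)"
        unfolding e[symmetric] h by (rule distrib_left)
      then show ?thesis by linarith
    qed
    then show ?thesis by (simp add: sum_subtractf[symmetric] sum_negf)
  qed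
  have C3: "[- (\<Sum>r<p. (int r)^(2*p-6)) = - 0] (mod int p)"
  proof (rule cong_uminus)
    have "[(\<Sum>r<p. (int r)^(2*p-6)) = (if 2*p-6 = p-1 then -1 else 0)] (mod int p)"
      by (rule psum[OF p]) (use p7 in auto)
    moreover have "2*p-6 \<noteq> p-1" using p7 by simp
    ultimately show "[(\<Sum>r<p. (int r)^(2*p-6)) = 0] (mod int p)" by simp
  qed
  have "[(\<Sum>j<p. (int j)^n * coeff (Qp p j) 2) = (- (\<Sum>r<p. (int r)^(n-1) * hh p r)) + (\<Sum>r<p. (int r)^(n-1) * hh p (r - 1))] (mod int p)"
    using cong_add[OF C1 C2] by (simp only: E1)
  then have "[(\<Sum>j<p. (int j)^n * coeff (Qp p j) 2) = - (\<Sum>r<p. (int r)^(2*p-6))] (mod int p)"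
    by (simp only: E3)
  then have "[(\<Sum>j<p. (int j)^n * coeff (Qp p j) 2) = - 0] (mod int p)"
    using C3 by (rule cong_trans)
  then show ?thesis unfolding n_def by simp
qed


lemma Bz_dvd:
  assumes p: "prime p" and p7: "p \<ge> 7"
  shows "int p dvd Bz p"
proof -
  define n where "n = p - 3"
  have n4: "n \<ge> 4" using p7 unfolding n_def by simp
  have M1: "[Bz p = (\<Sum>r<p. (int r)^n * (\<Sum>j<p. (int j)^n * poly (Qp p j) (int r)))] (mod int p)"
    unfolding Bz_def n_def[symmetric]
  proof (rule cong_sum)
    fix r assume r: "r \<in> {..<p}"
    show "[(int r)^n * (\<Sum>j<p. (-1)^j * int ((r-1) choose j) * (int j)^n) = (int r)^n * (\<Sum>j<p. (int j)^n * poly (Qp p j) (int r))] (mod int p)"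
    proof (cases "r = 0")
      case True then show ?thesis using n4 by (simp add: power_0_left)
    next
      case False
      show ?thesis
      proof (rule cong_mult[OF cong_refl], rule cong_sum)
        fix j assume j: "j \<in> {..<p}"
        have "[(-1)^j * int ((r-1) choose j) = poly (Qp p j) (int r)] (mod int p)"
          using binom_cong_Q[OF p, of r j] False j by simp
        then have "[(-1)^j * int ((r-1) choose j) * (int j)^n = poly (Qp p j) (int r) * (int j)^n] (mod int p)"
          by (rule cong_scalar_right)
        then show "[(-1)^j * int ((r-1) choose j) * (int j)^n = (int j)^n * poly (Qp p j) (int r)] (mod int p)"
          by (simp only: mult.commute[of "poly (Qp p j) (int r)"])
      qed
    qed
  qed
  have M2: "(\<Sum>r<p. (int r)^n * (\<Sum>j<p. (int j)^n * poly (Qp p j) (int r)))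
      = (\<Sum>j<p. (int j)^n * (\<Sum>r<p. (int r)^n * poly (Qp p j) (int r)))"
  proof -
    have "(\<Sum>r<p. (int r)^n * (\<Sum>j<p. (int j)^n * poly (Qp p j) (int r)))
        = (\<Sum>r<p. \<Sum>j<p. (int j)^n * ((int r)^n * poly (Qp p j) (int r)))"
      by (simp only: sum_distrib_left mult.left_commute)
    also have "\<dots> = (\<Sum>j<p. \<Sum>r<p. (int j)^n * ((int r)^n * poly (Qp p j) (int r)))"
      by (rule sum.swap)
    finally show ?thesis by (simp only: sum_distrib_left)
  qed
  have M3: "[(\<Sum>j<p. (int j)^n * (\<Sum>r<p. (int r)^n * poly (Qp p j) (int r))) = (\<Sum>j<p. (int j)^n * (- coeff (Qp p j) 2))] (mod int p)"
  proof (rule cong_sum)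
    fix j assume j: "j \<in> {..<p}"
    have deg: "degree (Qp p j) \<le> p - 1" using Qp_degree[of p j] j by simp
    show "[(int j)^n * (\<Sum>r<p. (int r)^n * poly (Qp p j) (int r)) = (int j)^n * (- coeff (Qp p j) 2)] (mod int p)"
      using poly_psum[OF p p7 deg] unfolding n_def[symmetric] by (rule cong_mult[OF cong_refl])
  qed
  have M4: "(\<Sum>j<p. (int j)^n * (- coeff (Qp p j) 2)) = - (\<Sum>j<p. (int j)^n * coeff (Qp p j) 2)"
    by (simp add: sum_negf)
  have M5: "[- (\<Sum>j<p. (int j)^n * coeff (Qp p j) 2) = - 0] (mod int p)"
    using C2_cong[OF p p7] unfolding n_def[symmetric] by (rule cong_uminus)
  have "[Bz p = - 0] (mod int p)"
    using cong_trans[OF cong_trans[OF M1[unfolded M2] M3[unfolded M4]] M5] .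
  then show ?thesis by (simp add: cong_0_iff)
qed


context
begin
unbundle fps_syntax

lemma neg_exp_pow: "(- fps_exp (-1::rat))^j = fps_const ((-1)^j) * fps_exp (- of_nat j)"
proof -
  have "(- fps_exp (-1::rat))^j = (-1)^j * (fps_exp (-1))^j" by (rule power_minus)
  also have "(fps_exp (-1::rat))^j = fps_exp (- of_nat j)" by (simp add: fps_exp_power_mult)
  also have "(-1::rat fps) = fps_const (-1)" by (metis fps_const_neg fps_const_1_eq_1)
  also have "(fps_const (-1::rat))^j = fps_const ((-1)^j)" by (rule fps_const_power)
  finally show ?thesis .
qed

lemma fps_pow_nth:
  "((1 - fps_exp (-1::rat))^i) $ n = (\<Sum>j\<le>i. of_nat (i choose j) * (-1)^j * (- of_nat j)^n) / fact n"
proof -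
  have "(1 - fps_exp (-1::rat))^i = (- fps_exp (-1) + 1)^i" by simp
  also have "\<dots> = (\<Sum>j\<le>i. of_nat (i choose j) * (- fps_exp (-1))^j * 1^(i-j))"
    by (rule binomial_ring)
  also have "\<dots> = (\<Sum>j\<le>i. fps_const (of_nat (i choose j) * (-1)^j) * fps_exp (- of_nat j))"
  proof (intro sum.cong refl)
    fix j
    have "(of_nat (i choose j) :: rat fps) = fps_const (of_nat (i choose j))" by (simp add: fps_of_nat)
    then show "of_nat (i choose j) * (- fps_exp (-1::rat))^j * 1^(i-j) = fps_const (of_nat (i choose j) * (-1)^j) * fps_exp (- of_nat j)"
      unfolding neg_exp_pow by (simp only: power_one mult_1_right fps_const_mult[symmetric] mult.assoc)
  qed
  finally show ?thesis
    by (simp add: fps_sum_nth sum_divide_distrib)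
qed

lemma B_int:
  fixes p :: nat
  assumes "p \<ge> 7" and "odd p"
  shows "poly_bernoulli (3 - int p) (p - 3) = of_int (Bz p)"
proof -
  define n where "n = p - 3"
  have ev: "even n" using assms unfolding n_def by (simp add: even_diff_nat)
  have n4: "n \<ge> 4" using assms unfolding n_def by simp
  let ?E = "1 - fps_exp (-1::rat)"
  have Li: "Li_div_fps (3 - int p) $ i = (of_nat (i+1))^n" for i
  proof -
    have "- (3 - int p) = int n" using assms unfolding n_def by simp
    then show ?thesis unfolding Li_div_fps_def by simp
  qed
  have z: "(?E^i) $ n = 0" if "n < i" for i
    using startsby_zero_power_prefix[of ?E i] that by simp
  have "poly_bernoulli (3 - int p) n = fact n * (\<Sum>i\<in>{0..n}. Li_div_fps (3 - int p) $ i * ((?E^i) $ n))"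
    unfolding poly_bernoulli_def fps_compose_nth ..
  also have "(\<Sum>i\<in>{0..n}. Li_div_fps (3 - int p) $ i * ((?E^i) $ n)) = (\<Sum>i<p-1. Li_div_fps (3 - int p) $ i * ((?E^i) $ n))"
    by (rule sum.mono_neutral_left) (use z n_def assms in auto)
  also have "fact n * (\<Sum>i<p-1. Li_div_fps (3 - int p) $ i * ((?E^i) $ n))
      = (\<Sum>i<p-1. (of_nat (i+1))^n * (\<Sum>j<p. of_nat (i choose j) * (-1)^j * (of_nat j)^n))"
  proof -
    have "fact n * (Li_div_fps (3 - int p) $ i * ((?E^i) $ n)) = (of_nat (i+1))^n * (\<Sum>j<p. of_nat (i choose j) * (-1)^j * (of_nat j)^n)"
      if i: "i \<in> {..<p-1}" for i
    proof -
      have "(\<Sum>j\<le>i. of_nat (i choose j) * (-1)^j * (- of_nat j)^n) = (\<Sum>j<p. of_nat (i choose j) * (-1)^j * ((of_nat j)::rat)^n)"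
        by (rule sum.mono_neutral_cong_left) (use i ev in auto)
      then show ?thesis
        unfolding Li fps_pow_nth by simp
    qed
    then show ?thesis unfolding sum_distrib_left by (rule sum.cong[OF refl])
  qed
  also have "\<dots> = (\<Sum>r<p. (of_nat r)^n * (\<Sum>j<p. of_nat ((r-1) choose j) * (-1)^j * ((of_nat j)::rat)^n))"
  proof -
    obtain q where q: "p = Suc q" using assms by (cases p) auto
    have "(\<Sum>r<Suc q. (of_nat r)^n * (\<Sum>j<p. of_nat ((r-1) choose j) * (-1)^j * ((of_nat j)::rat)^n))
       = (of_nat 0)^n * (\<Sum>j<p. of_nat ((0-1) choose j) * (-1)^j * ((of_nat j)::rat)^n) + (\<Sum>i<q. (of_nat (Suc i))^n * (\<Sum>j<p. of_nat ((Suc i-1) choose j) * (-1)^j * ((of_nat j)::rat)^n))"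
      by (rule sum.lessThan_Suc_shift)
    then show ?thesis using n4 q by simp
  qed
  also have "\<dots> = of_int (Bz p)"
    unfolding Bz_def n_def by (simp add: mult_ac)
  finally show ?thesis unfolding n_def .
qed


end

theorem theorem3p5:
  fixes p :: nat
  assumes "prime p" and "p \<ge> 7"
  shows "\<exists>m::int. poly_bernoulli (3 - int p) (p - 3) = of_int (int p * m)"
proof -
  have "odd p" using assms prime_odd_nat by simp
  then have e: "poly_bernoulli (3 - int p) (p - 3) = of_int (Bz p)" using B_int assms(2) by blast
  obtain m where "Bz p = int p * m" using Bz_dvd[OF assms] by (elim dvdE)
  then have "poly_bernoulli (3 - int p) (p - 3) = of_int (int p * m)" using e by simp
  then show ?thesis by blast
qed

end
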